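(* Let $p \geq 6$ and $q_1, q_2 \geq 3$ be integers and let $L$ be the Laplacian of the graph $C_{q_1} \oplus K_p \oplus C_{q_2}$. Let $E_K$ be the span of the vectors $e_{-1}-e_{-k}$, $k=2,\ldots,p-2$ (equivalently, vectors supported on $\{-p+2,\ldots,-1\}$ with entries summing to $0$), and $E_K^\perp$ its orthogonal complement. For $\lambda>4$ let $\sigma_+ = \tfrac12[(2-\lambda)+\sqrt{(2-\lambda)^2-4}]$, and for an integer $q$ let $$Q_q = \sigma_+\frac{1+\sigma_+^{2q-3}}{1+\sigma_+^{2q-1}} - (p-\lambda), \qquad D_{q_1,p,q_2}(\lambda) = (p-2)(2 - Q_{q_1} - Q_{q_2}) - (2-\lambda)(Q_{q_1}Q_{q_2} - 1).$$ Then $\lambda > 4$ is an eigenvalue of $L$ with a corresponding eigenvector $v \in E_K^\perp$ if and only if $D_{q_1,p,q_2}(\lambda) = 0$. The equation $D_{q_1,p,q_2}(\lambda)=0$ has exactly two solutions in $(p,p+2]$ and no solutions in $(4,p] \cup (p+2,+\infty)$. In the case $q_1 = q_2 = q$ one has the factorization $D_{q,p,q}(\lambda) = F_{A,q}(\lambda)\,F_{S,q}(\lambda)$ with $$F_{S,q}(\lambda) = (2-\lambda)(Q_q+1) + 2(p-2), \qquad F_{A,q}(\lambda) = 1 - Q_q;$$ the eigenvectors in $E_K^\perp$ corresponding to solutions $\lambda>4$ of $F_{S,q}(\lambda)=0$ are symmetric, and those corresponding to solutions $\lambda>4$ of $F_{A,q}(\lambda)=0$ are antisymmetric. Furthermore,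 each of the equations $F_{A,q}(\lambda)=0$, $F_{S,q}(\lambda)=0$ ($q\geq 3$) has exactly one solution in $(p,p+2)$ and no solutions in $(4,p] \cup [p+2,+\infty)$.
   Context: For integers $p \geq 3$, $q_1,q_2 \geq 2$, the graph $C_{q_1} \oplus K_p \oplus C_{q_2}$ has vertex set $\{-q_1-p+2,\ldots,-p\} \cup \{-p+1,\ldots,0\} \cup \{1,\ldots,q_2-1\}$. Its edges are: every pair of distinct vertices in $\{-p+1,\ldots,0\}$, the edges $\{-p,-p+1\}$ and $\{0,1\}$, the edges $\{j,j+1\}$ for $-q_1-p+2 \leq j \leq -p-1$, and the edges $\{j,j+1\}$ for $1 \leq j \leq q_2-2$. The Laplacian $L$ is the matrix with $L_{ii}$ equal to the degree of $i$, $L_{ij}=-1$ if $i\neq j$ are adjacent and $0$ otherwise. Vectors are real functions on the vertex set with the standard inner product; $e_j$ is the indicator vector of $j$. When $q_1=q_2=q$, a vector $v$ is symmetric if $v_{-p+1-n} = v_n$ for all $n \in \{0,\ldots,q-1\}$ and antisymmetric if $v_{-p+1-n} = -v_n$ for all $n \in \{0,\ldots,q-1\}$ (invariance, resp. anti-invariance, under the reflection $j \mapsto -p+1-j$). *)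

theory Defs
  imports Complex_Main
begin

text \<open>The graph C_q1 + K_p + C_q2 on the integer vertex set
  {-q1-p+2 .. q2-1}; vectors are functions int => real vanishing outside it.\<close>

definition verts :: "nat \<Rightarrow> nat \<Rightarrow> nat \<Rightarrow> int set" where
  "verts p q1 q2 = {- int q1 - int p + 2 .. int q2 - 1}"

definition adj :: "nat \<Rightarrow> nat \<Rightarrow> nat \<Rightarrow> int \<Rightarrow> int \<Rightarrow> bool" where
  "adj p q1 q2 i j \<longleftrightarrow>
     i \<in> verts p q1 q2 \<and> j \<in> verts p q1 q2 \<and> i \<noteq> j \<and>
     ((i \<in> {- int p + 1 .. 0} \<and> j \<in> {- int p + 1 .. 0})
      \<or> {i, j} = {- int p, - int p + 1}
      \<or> {i, j} = {0, 1}
      \<or> (\<exists>k. - int q1 - int p + 2 \<le> k \<and> k \<le> - int p - 1 \<and> {i, j} = {k, k + 1})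
      \<or> (\<exists>k. 1 \<le> k \<and> k \<le> int q2 - 2 \<and> {i, j} = {k, k + 1}))"

definition degree :: "nat \<Rightarrow> nat \<Rightarrow> nat \<Rightarrow> int \<Rightarrow> nat" where
  "degree p q1 q2 i = card {j \<in> verts p q1 q2. adj p q1 q2 i j}"

definition lap :: "nat \<Rightarrow> nat \<Rightarrow> nat \<Rightarrow> int \<Rightarrow> int \<Rightarrow> real" where
  "lap p q1 q2 i j =
     (if i = j then real (degree p q1 q2 i) else if adj p q1 q2 i j then -1 else 0)"

definition lap_apply :: "nat \<Rightarrow> nat \<Rightarrow> nat \<Rightarrow> (int \<Rightarrow> real) \<Rightarrow> int \<Rightarrow> real" where
  "lap_apply p q1 q2 v i = (\<Sum>j\<in>verts p q1 q2. lap p q1 q2 i j * v j)"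

definition is_vec :: "nat \<Rightarrow> nat \<Rightarrow> nat \<Rightarrow> (int \<Rightarrow> real) \<Rightarrow> bool" where
  "is_vec p q1 q2 v \<longleftrightarrow> (\<forall>i. i \<notin> verts p q1 q2 \<longrightarrow> v i = 0)"

definition vinner :: "nat \<Rightarrow> nat \<Rightarrow> nat \<Rightarrow> (int \<Rightarrow> real) \<Rightarrow> (int \<Rightarrow> real) \<Rightarrow> real" where
  "vinner p q1 q2 v w = (\<Sum>i\<in>verts p q1 q2. v i * w i)"

definition EK :: "nat \<Rightarrow> nat \<Rightarrow> nat \<Rightarrow> (int \<Rightarrow> real) set" where
  "EK p q1 q2 = {w. is_vec p q1 q2 w \<and> (\<forall>i. i \<notin> {- int p + 2 .. -1} \<longrightarrow> w i = 0)
                   \<and> (\<Sum>i\<in>{- int p + 2 .. -1}. w i) = 0}"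

definition EK_perp :: "nat \<Rightarrow> nat \<Rightarrow> nat \<Rightarrow> (int \<Rightarrow> real) set" where
  "EK_perp p q1 q2 = {v. is_vec p q1 q2 v \<and> (\<forall>w\<in>EK p q1 q2. vinner p q1 q2 v w = 0)}"

definition eigvec_EKperp :: "nat \<Rightarrow> nat \<Rightarrow> nat \<Rightarrow> real \<Rightarrow> (int \<Rightarrow> real) \<Rightarrow> bool" where
  "eigvec_EKperp p q1 q2 lam v \<longleftrightarrow>
     is_vec p q1 q2 v \<and> v \<noteq> (\<lambda>_. 0) \<and> v \<in> EK_perp p q1 q2 \<and>
     (\<forall>i\<in>verts p q1 q2. lap_apply p q1 q2 v i = lam * v i)"

definition sigma_plus :: "real \<Rightarrow> real" where
  "sigma_plus lam = ((2 - lam) + sqrt ((2 - lam)^2 - 4)) / 2"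

definition Qf :: "nat \<Rightarrow> nat \<Rightarrow> real \<Rightarrow> real" where
  "Qf p q lam = sigma_plus lam * (1 + sigma_plus lam ^ (2*q - 3)) / (1 + sigma_plus lam ^ (2*q - 1))
                - (real p - lam)"

definition Dfun :: "nat \<Rightarrow> nat \<Rightarrow> nat \<Rightarrow> real \<Rightarrow> real" where
  "Dfun q1 p q2 lam = (real p - 2) * (2 - Qf p q1 lam - Qf p q2 lam)
                      - (2 - lam) * (Qf p q1 lam * Qf p q2 lam - 1)"

definition FS :: "nat \<Rightarrow> nat \<Rightarrow> real \<Rightarrow> real" where
  "FS p q lam = (2 - lam) * (Qf p q lam + 1) + 2 * (real p - 2)"

definition FA :: "nat \<Rightarrow> nat \<Rightarrow> real \<Rightarrow> real" where
  "FA p q lam = 1 - Qf p q lam"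

definition symmetric_vec :: "nat \<Rightarrow> nat \<Rightarrow> (int \<Rightarrow> real) \<Rightarrow> bool" where
  "symmetric_vec p q v \<longleftrightarrow> (\<forall>n\<in>{0 .. int q - 1}. v (- int p + 1 - n) = v n)"

definition antisymmetric_vec :: "nat \<Rightarrow> nat \<Rightarrow> (int \<Rightarrow> real) \<Rightarrow> bool" where
  "antisymmetric_vec p q v \<longleftrightarrow> (\<forall>n\<in>{0 .. int q - 1}. v (- int p + 1 - n) = - v n)"

end

theory Submission
  imports Defs
begin

fun pseq :: "real \<Rightarrow> nat \<Rightarrow> real" where
  "pseq t 0 = 1"
| "pseq t (Suc 0) = t - 1"
| "pseq t (Suc (Suc n)) = t * pseq t (Suc n) - pseq t n"

fun rr :: "real \<Rightarrow> nat \<Rightarrow> real" where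
  "rr t 0 = 1"
| "rr t (Suc n) = 1 / (t - rr t n)"

lemma recip_lt: "(x::real) < y \<Longrightarrow> y < 0 \<Longrightarrow> 1/y < 1/x"
  by (simp add: divide_simps)

lemma rr_bound: "t < -2 \<Longrightarrow> -1 \<le> rr t n \<and> rr t n \<le> 1"
proof (induction n)
  case 0 then show ?case by simp
next
  case (Suc n)
  then have "t - rr t n < -1" by linarith
  then show ?case by (simp add: divide_simps)
qed

lemma rr_neg: "t < -2 \<Longrightarrow> -1 < rr t (Suc n) \<and> rr t (Suc n) < 0"
proof -
  assume t: "t < -2"
  from rr_bound[OF t, of n] t have "t - rr t n < -1" by linarith
  then show ?thesis by (simp add: divide_simps)
qed

lemma rr_mono_aux: "t1 < t2 \<Longrightarrow> t2 < -2 \<Longrightarrow> rr t2 n \<le> rr t1 n \<and> rr t2 (Suc n) < rr t1 (Suc n)"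
proof (induction n)
  case 0
  then show ?case by (simp add: divide_simps)
next
  case (Suc n)
  then have h: "rr t2 (Suc n) < rr t1 (Suc n)" by blast
  have b2: "rr t2 (Suc n) \<ge> -1" using rr_neg[of t2 n] Suc.prems by linarith
  have "t1 - rr t1 (Suc n) < t2 - rr t2 (Suc n)" using h Suc.prems by linarith
  moreover have "t2 - rr t2 (Suc n) < 0" using b2 Suc.prems by linarith
  ultimately have "1 / (t2 - rr t2 (Suc n)) < 1 / (t1 - rr t1 (Suc n))"
    by (simp add: divide_simps)
  then show ?case using h by simp
qed

lemma rr_mono: "t1 < t2 \<Longrightarrow> t2 < -2 \<Longrightarrow> rr t2 (Suc n) < rr t1 (Suc n)"
  using rr_mono_aux by blast

lemma rr_decn: "t < -2 \<Longrightarrow> rr t (Suc n) < rr t n"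
proof (induction n)
  case 0 then show ?case using rr_neg[of t 0] by simp
next
  case (Suc n)
  have b: "rr t (Suc n) \<ge> -1" using rr_neg[of t n] Suc.prems by linarith
  have b2: "rr t n \<ge> -1" using rr_bound[of t n] Suc.prems by linarith
  have "t - rr t n < t - rr t (Suc n)" using Suc by linarith
  moreover have "t - rr t (Suc n) < 0" using b Suc.prems by linarith
  ultimately have "1 / (t - rr t (Suc n)) < 1 / (t - rr t n)"
    by (rule recip_lt)
  then show ?case by (metis rr.simps(2))
qed

lemma rr_strict_n: "t < -2 \<Longrightarrow> m < n \<Longrightarrow> rr t n < rr t m"
proof (induction n)
  case 0 then show ?case by simp
next
  case (Suc n)
  then show ?case using rr_decn[of t n] by (cases "m = n") auto
qed

lemma rr_cont: "continuous_on {..< -2} (\<lambda>t. rr t n)"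
proof (induction n)
  case 0 then show ?case by simp
next
  case (Suc n)
  have "\<forall>t\<in>{..< -2}. t - rr t n \<noteq> 0"
  proof
    fix t :: real assume "t \<in> {..< -2}"
    then have "t < -2" by simp
    then show "t - rr t n \<noteq> 0" using rr_bound[of t n] by linarith
  qed
  then have "continuous_on {..< -2} (\<lambda>t. 1 / (t - rr t n))"
    by (intro continuous_intros Suc.IH) auto
  then show ?case by simp
qed

lemma pseq_rr: "t < -2 \<Longrightarrow> pseq t n = rr t (Suc n) * pseq t (Suc n)"
proof (induction n rule: nat_less_induct)
  case (1 n)
  show ?case
  proof (cases n)
    case 0 then show ?thesis using 1 by simp
  next
    case (Suc m)
    have ih: "pseq t m = rr t (Suc m) * pseq t (Suc m)" using 1 Suc by simp
    have ne: "t - rr t (Suc m) \<noteq> 0" using rr_neg[of t m] 1(2) by linarith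
    have "pseq t (Suc (Suc m)) = (t - rr t (Suc m)) * pseq t (Suc m)"
      using ih by (simp add: algebra_simps)
    then show ?thesis using Suc ne by simp
  qed
qed

lemma pseq_nz: "t < -2 \<Longrightarrow> pseq t n \<noteq> 0"
proof (induction n)
  case 0 then show ?case by simp
next
  case (Suc n) then show ?case using pseq_rr[of t n] by auto
qed

lemma sigma_props:
  assumes "lam > 4"
  shows "-1 < sigma_plus lam \<and> sigma_plus lam < 0 \<and> sigma_plus lam + 1 / sigma_plus lam = 2 - lam"
proof -
  define t where "t = 2 - lam"
  have t: "t < -2" using assms t_def by simp
  define r where "r = sqrt (t^2 - 4)"
  have "(-t)*(-t) > 2*2" using t by (intro mult_strict_mono) auto
  then have tt: "t^2 - 4 \<ge> 0" by (simp add: power2_eq_square)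
  have r0: "r \<ge> 0" unfolding r_def using tt by (rule real_sqrt_ge_zero)
  have r2: "r^2 = t^2 - 4" unfolding r_def using tt by (rule real_sqrt_pow2)
  have s: "sigma_plus lam = (t + r) / 2" by (simp add: sigma_plus_def t_def r_def)
  have "r^2 < (-t)^2" using r2 by simp
  then have l1: "r < -t" by (rule power2_less_imp_less) (use t in linarith)
  have "(-2-t)^2 < r^2" using r2 t by (simp add: power2_eq_square algebra_simps)
  then have l2: "-2-t < r" using r0 by (rule power2_less_imp_less)
  have a: "-1 < (t+r)/2" "(t+r)/2 < 0" using l1 l2 by auto
  have e: "(t+r)*(t+r) + 4 = 2*t*(t+r)" using r2 by (simp add: power2_eq_square algebra_simps)
  have nz: "2*(t+r) \<noteq> 0" using a by linarith
  have e': "(t+r)*(t+r) + 4 = t*(2*(t+r))" using e by (simp add: algebra_simps)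
  have "(t+r)/2 + 1 / ((t+r)/2) = ((t+r)*(t+r) + 4) / (2*(t+r))"
    using a by (simp add: field_simps)
  also have "\<dots> = t*(2*(t+r)) / (2*(t+r))" by (simp only: e')
  also have "\<dots> = t" using nz by (rule nonzero_mult_div_cancel_right)
  finally have fin: "(t+r)/2 + 1 / ((t+r)/2) = t" .
  have g: "-1 < sigma_plus lam \<and> sigma_plus lam < 0 \<and> sigma_plus lam + 1/sigma_plus lam = t"
    unfolding s using a fin by blast
  then show ?thesis unfolding t_def .
qed

lemma rr_closed:
  assumes "-1 < s" "s < 0"
  shows "rr (s + 1/s) n = (s^(2*n) + s) / (s^(2*n+1) + 1)"
proof (induction n)
  case 0 then show ?case using assms by simp
next
  case (Suc n)
  have pw2: "\<bar>s^(Suc k)\<bar> < 1" for k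
  proof -
    have "\<bar>s\<bar>^Suc k < 1" using assms by (intro power_Suc_less_one) auto
    then show ?thesis by (metis power_abs)
  qed
  have d1: "s^(2*n+1) + 1 \<noteq> 0" using pw2[of "2*n"] by auto
  have d2: "s^(2*n+3) + 1 \<noteq> 0" using pw2[of "2*n+2"] by (auto simp: numeral_eq_Suc)
  have sn: "s \<noteq> 0" using assms by simp
  have e: "s + 1/s - (s^(2*n) + s) / (s^(2*n+1) + 1) = (s^(2*n+3) + 1) / (s * (s^(2*n+1) + 1))"
    using d1 sn by (simp add: field_simps power_add) (simp add: algebra_simps power_add numeral_eq_Suc)
  have "rr (s + 1/s) (Suc n) = s * (s^(2*n+1) + 1) / (s^(2*n+3) + 1)"
    using Suc e by simp
  also have "\<dots> = (s^(2*Suc n) + s) / (s^(2*Suc n+1) + 1)"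
    by (simp add: algebra_simps power_add numeral_eq_Suc)
  finally show ?case .
qed


lemma Qf_rr:
  assumes "lam > 4" "q \<ge> 2"
  shows "Qf p q lam = rr (2 - lam) (q - 1) + lam - real p"
proof -
  define s where "s = sigma_plus lam"
  have sp: "-1 < s" "s < 0" "s + 1/s = 2 - lam" using sigma_props[OF assms(1)] s_def by auto
  obtain m where m: "q = 2 + m" using le_Suc_ex[OF assms(2)] by blast
  have e1: "2*(q-1) = Suc (2*m+1)" "Suc (2*m+1)+1 = 2*m+3" "2*q-3 = 2*m+1" "2*q-1 = 2*m+3"
    using m by simp_all
  have "rr (2 - lam) (q - 1) = (s^(2*(q-1)) + s) / (s^(2*(q-1)+1) + 1)"
    using rr_closed[OF sp(1,2), of "q-1"] sp(3) by simp
  also have "\<dots> = (s * s^(2*m+1) + s) / (s^(2*m+3) + 1)"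
    by (simp only: e1 power_Suc)
  also have "\<dots> = s * (1 + s^(2*q-3)) / (1 + s^(2*q-1))"
    by (simp only: e1) (simp add: algebra_simps)
  finally show ?thesis unfolding Qf_def s_def by simp
qed

lemma FA_rr:
  assumes "lam > 4" "q \<ge> 2"
  shows "FA p q lam = 1 + real p - lam - rr (2 - lam) (q - 1)"
  using Qf_rr[OF assms] unfolding FA_def by simp

lemma rr_q_bounds:
  assumes "lam > 4" "q \<ge> 2"
  shows "-1 < rr (2 - lam) (q - 1) \<and> rr (2 - lam) (q - 1) < 0"
proof -
  obtain m where m: "q - 1 = Suc m" using le_Suc_ex[OF assms(2)] by force
  show ?thesis using rr_neg[of "2 - lam" m] assms(1) m by simp
qed

lemma FA_dec:
  assumes "4 < x" "x < y" "q \<ge> 2"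
  shows "FA p q y < FA p q x"
proof -
  obtain m where m: "q - 1 = Suc m" using le_Suc_ex[OF assms(3)] by force
  have "rr (2 - x) (Suc m) < rr (2 - y) (Suc m)"
    using rr_mono[of "2 - y" "2 - x" m] assms by simp
  then show ?thesis using FA_rr[of x q p] FA_rr[of y q p] assms m by simp
qed

lemma FA_pos: "4 < x \<Longrightarrow> x \<le> real p + 1 \<Longrightarrow> q \<ge> 2 \<Longrightarrow> FA p q x > 0"
  using FA_rr[of x q p] rr_q_bounds[of x q] by simp

lemma FA_neg: "4 < x \<Longrightarrow> x \<ge> real p + 2 \<Longrightarrow> q \<ge> 2 \<Longrightarrow> FA p q x < 0"
  using FA_rr[of x q p] rr_q_bounds[of x q] by simp

lemma FA_cont:
  assumes "q \<ge> 2"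
  shows "continuous_on {4<..} (FA p q)"
proof -
  have "continuous_on {4<..} (\<lambda>x. rr (2 - x) (q - 1))"
    by (rule continuous_on_compose2[OF rr_cont[of "q-1"]]) (auto intro!: continuous_intros)
  then have "continuous_on {4<..} (\<lambda>x. 1 + real p - x - rr (2 - x) (q - 1))"
    by (intro continuous_intros)
  moreover have "\<forall>x\<in>{4<..}. FA p q x = 1 + real p - x - rr (2 - x) (q - 1)"
    using FA_rr assms by auto
  ultimately show ?thesis using continuous_on_cong by (metis (mono_tags, lifting))
qed

lemma Dfun_alt: "Dfun q1 p q2 lam = (real p - lam) * (FA p q1 lam + FA p q2 lam) + (lam - 2) * (FA p q1 lam * FA p q2 lam)"
  unfolding Dfun_def FA_def by (simp add: algebra_simps)

lemma FS_alt: "FS p q lam = 2 * (real p - lam) + (lam - 2) * FA p q lam"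
  unfolding FS_def FA_def by (simp add: algebra_simps)

lemma D_sym: "Dfun q p q lam = FA p q lam * FS p q lam"
  unfolding Dfun_def FA_def FS_def by (simp add: algebra_simps)

lemma FA_ne: "4 < x \<Longrightarrow> q1 \<ge> 2 \<Longrightarrow> q2 \<ge> 2 \<Longrightarrow> q1 \<noteq> q2 \<Longrightarrow> FA p q1 x \<noteq> FA p q2 x"
proof -
  assume a: "4 < x" "q1 \<ge> 2" "q2 \<ge> 2" "q1 \<noteq> q2"
  have "rr (2 - x) (q1 - 1) \<noteq> rr (2 - x) (q2 - 1)"
  proof (cases "q1 < q2")
    case True
    then have "q1 - 1 < q2 - 1" using a by linarith
    then show ?thesis using rr_strict_n[of "2-x" "q1-1" "q2-1"] a by force
  next
    case False
    then have "q2 - 1 < q1 - 1" using a by linarith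
    then show ?thesis using rr_strict_n[of "2-x" "q2-1" "q1-1"] a by force
  qed
  then show ?thesis using FA_rr[of x q1 p] FA_rr[of x q2 p] a by simp
qed


lemma frac_dec: "(p::real) > 2 \<Longrightarrow> p < x \<Longrightarrow> x < y \<Longrightarrow> (y - 2) / (y - p) < (x - 2) / (x - p)"
proof -
  assume a: "p > 2" "p < x" "x < y"
  have "(y - 2) * (x - p) < (x - 2) * (y - p)"
  proof -
    have "(x - 2) * (y - p) - (y - 2) * (x - p) = (p - 2) * (y - x)" by (simp add: algebra_simps)
    moreover have "(p - 2) * (y - x) > 0" using a by simp
    ultimately show ?thesis by linarith
  qed
  then show ?thesis using a by (simp add: divide_simps)
qed

lemma root_eq:
  fixes p x a b :: real
  assumes "(p - x) * (a + b) + (x - 2) * (a * b) = 0" "p < x" "a \<noteq> 0" "b \<noteq> 0"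
  shows "(x - 2) / (x - p) = 1 / a + 1 / b"
proof -
  have "(x - 2) * (a * b) = (x - p) * (a + b)" using assms(1) by (simp add: algebra_simps)
  then show ?thesis using assms(2-4) by (simp add: field_simps)
qed

lemma recip_mono_pos: "0 < (b::real) \<Longrightarrow> b < a \<Longrightarrow> 1 / a < 1 / b"
  by (simp add: divide_simps)

lemma recip_mono_neg: "(b::real) < a \<Longrightarrow> a < 0 \<Longrightarrow> 1 / a < 1 / b"
  by (simp add: divide_simps)

lemma two_roots:
  fixes f1 f2 :: "real \<Rightarrow> real" and p r1 r2 :: real
  assumes p2: "p > 2"
    and c1: "continuous_on {p..p+2} f1" and c2: "continuous_on {p..p+2} f2"
    and d1: "\<And>x y. p \<le> x \<Longrightarrow> x < y \<Longrightarrow> y \<le> p+2 \<Longrightarrow> f1 y < f1 x"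
    and d2: "\<And>x y. p \<le> x \<Longrightarrow> x < y \<Longrightarrow> y \<le> p+2 \<Longrightarrow> f2 y < f2 x"
    and z1: "f1 r1 = 0" and z2: "f2 r2 = 0" and r: "p < r1" "r1 < r2" "r2 < p+2"
  shows "card {x. p < x \<and> x \<le> p+2 \<and> (p - x) * (f1 x + f2 x) + (x - 2) * (f1 x * f2 x) = 0} = 2"
proof -
  define G where "G x = (p - x) * (f1 x + f2 x) + (x - 2) * (f1 x * f2 x)" for x
  have s1p: "f1 x > 0" if "p \<le> x" "x < r1" for x using d1[of x r1] that z1 r by simp
  have s1n: "f1 x < 0" if "r1 < x" "x \<le> p+2" for x using d1[of r1 x] that z1 r by simp
  have s2p: "f2 x > 0" if "p \<le> x" "x < r2" for x using d2[of x r2] that z2 r by simp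
  have s2n: "f2 x < 0" if "r2 < x" "x \<le> p+2" for x using d2[of r2 x] that z2 r by simp
  have cG: "continuous_on {p..p+2} G" unfolding G_def by (intro continuous_intros c1 c2)
  have Gp: "G p > 0" unfolding G_def using s1p[of p] s2p[of p] r p2 by simp
  have Gr1: "G r1 < 0" unfolding G_def using z1 s2p[of r1] r by (simp add: mult_neg_pos)
  have Gr2: "G r2 > 0" unfolding G_def using z2 s1n[of r2] r by (simp add: mult_neg_neg)
  obtain z1' where z1': "p \<le> z1'" "z1' \<le> r1" "G z1' = 0"
    using IVT2'[of G r1 0 p] Gp Gr1 r continuous_on_subset[OF cG, of "{p..r1}"] by auto
  have zz1: "p < z1'" "z1' < r1" using z1' Gp Gr1 by (auto simp: order.order_iff_strict)
  obtain z2' where z2': "r1 \<le> z2'" "z2' \<le> r2" "G z2' = 0"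
    using IVT'[of G r1 0 r2] Gr2 Gr1 r continuous_on_subset[OF cG, of "{r1..r2}"] by auto
  have zz2: "r1 < z2'" "z2' < r2" using z2' Gr2 Gr1 by (auto simp: order.order_iff_strict)
  have u1: "x = z1'" if "p < x" "x < r1" "G x = 0" for x
  proof (rule ccontr)
    assume ne: "x \<noteq> z1'"
    have k: "(y - 2) / (y - p) = 1 / f1 y + 1 / f2 y" if "p < y" "y < r1" "G y = 0" for y
      using root_eq[of p y "f1 y" "f2 y"] that s1p[of y] s2p[of y] r unfolding G_def by auto
    have mono: "\<not> (G u = 0 \<and> G w = 0)" if "p < u" "u < w" "w < r1" for u w
    proof
      assume "G u = 0 \<and> G w = 0"
      then have e: "(u - 2) / (u - p) = 1 / f1 u + 1 / f2 u" "(w - 2) / (w - p) = 1 / f1 w + 1 / f2 w"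
        using k that by auto
      have "1 / f1 u < 1 / f1 w" using recip_mono_pos[of "f1 w" "f1 u"] s1p[of w] d1[of u w] that r by auto
      moreover have "1 / f2 u < 1 / f2 w" using recip_mono_pos[of "f2 w" "f2 u"] s2p[of w] d2[of u w] that r by auto
      moreover have "(w - 2) / (w - p) < (u - 2) / (u - p)" using frac_dec[of p u w] p2 that by auto
      ultimately show False using e by linarith
    qed
    show False
    proof (cases "x < z1'")
      case True then show ?thesis using mono[of x z1'] that zz1 z1' by auto
    next
      case False then show ?thesis using mono[of z1' x] that zz1 z1' ne by auto
    qed
  qed
  have u2: "x = z2'" if "r1 < x" "x < r2" "G x = 0" for x
  proof (rule ccontr)
    assume ne: "x \<noteq> z2'"
    have k: "(y - 2) / (y - p) = 1 / f1 y + 1 / f2 y" if "r1 < y" "y < r2" "G y = 0" for y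
      using root_eq[of p y "f1 y" "f2 y"] that s1n[of y] s2p[of y] r unfolding G_def by auto
    have mono: "\<not> (G u = 0 \<and> G w = 0)" if "r1 < u" "u < w" "w < r2" for u w
    proof
      assume "G u = 0 \<and> G w = 0"
      then have e: "(u - 2) / (u - p) = 1 / f1 u + 1 / f2 u" "(w - 2) / (w - p) = 1 / f1 w + 1 / f2 w"
        using k that by auto
      have "1 / f1 u < 1 / f1 w" using recip_mono_neg[of "f1 w" "f1 u"] s1n[of u] d1[of u w] that r by auto
      moreover have "1 / f2 u < 1 / f2 w" using recip_mono_pos[of "f2 w" "f2 u"] s2p[of w] d2[of u w] that r by auto
      moreover have "(w - 2) / (w - p) < (u - 2) / (u - p)" using frac_dec[of p u w] p2 that r by auto
      ultimately show False using e by linarith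
    qed
    show False
    proof (cases "x < z2'")
      case True then show ?thesis using mono[of x z2'] that zz2 z2' by auto
    next
      case False then show ?thesis using mono[of z2' x] that zz2 z2' ne by auto
    qed
  qed
  have u3: "G x \<noteq> 0" if "r2 < x" "x \<le> p + 2" for x
  proof -
    have f: "f1 x < 0" "f2 x < 0" using s1n s2n that r by auto
    have "(p - x) * (f1 x + f2 x) > 0" using f that r by (intro mult_neg_neg) auto
    moreover have "(x - 2) * (f1 x * f2 x) > 0" using f that r p2 by (intro mult_pos_pos mult_neg_neg) auto
    ultimately have "G x > 0" unfolding G_def by linarith
    then show ?thesis by simp
  qed
  have "{x. p < x \<and> x \<le> p+2 \<and> G x = 0} = {z1', z2'}"
  proof
    show "{z1', z2'} \<subseteq> {x. p < x \<and> x \<le> p+2 \<and> G x = 0}" using z1' z2' zz1 zz2 r by auto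
  next
    show "{x. p < x \<and> x \<le> p+2 \<and> G x = 0} \<subseteq> {z1', z2'}"
    proof
      fix x assume x: "x \<in> {x. p < x \<and> x \<le> p+2 \<and> G x = 0}"
      then have x': "p < x" "x \<le> p+2" "G x = 0" by auto
      consider "x < r1" | "x = r1" | "r1 < x \<and> x < r2" | "x = r2" | "r2 < x" by linarith
      then show "x \<in> {z1', z2'}"
      proof cases
        case 1 then show ?thesis using u1 x' by auto
      next
        case 2 then show ?thesis using Gr1 x' by auto
      next
        case 3 then show ?thesis using u2 x' by auto
      next
        case 4 then show ?thesis using Gr2 x' by auto
      next
        case 5 then show ?thesis using u3 x' by auto
      qed
    qed
  qed
  moreover have "z1' \<noteq> z2'" using zz1 zz2 by simp
  ultimately show ?thesis unfolding G_def by simp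
qed

lemma sym_roots:
  fixes f :: "real \<Rightarrow> real" and p r :: real
  assumes p2: "p > 2"
    and c: "continuous_on {p..p+2} f"
    and d: "\<And>x y. p \<le> x \<Longrightarrow> x < y \<Longrightarrow> y \<le> p+2 \<Longrightarrow> f y < f x"
    and z: "f r = 0" and r: "p < r" "r < p+2"
  shows "\<exists>z. p < z \<and> z < r \<and> 2 * (p - z) + (z - 2) * f z = 0 \<and>
           (\<forall>x. p < x \<and> x \<le> p + 2 \<and> 2 * (p - x) + (x - 2) * f x = 0 \<longrightarrow> x = z)"
proof -
  define g where "g x = 2 * (p - x) + (x - 2) * f x" for x
  have sp: "f x > 0" if "p \<le> x" "x < r" for x using d[of x r] that z r by simp
  have sn: "f x \<le> 0" if "r \<le> x" "x \<le> p+2" for x using d[of r x] that z r by (cases "x = r") auto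
  have cg: "continuous_on {p..p+2} g" unfolding g_def by (intro continuous_intros c)
  have gp: "g p > 0" unfolding g_def using sp[of p] r p2 by simp
  have gr: "g r < 0" unfolding g_def using z r by simp
  obtain z0 where z0: "p \<le> z0" "z0 \<le> r" "g z0 = 0"
    using IVT2'[of g r 0 p] gp gr r continuous_on_subset[OF cg, of "{p..r}"] by auto
  have zz: "p < z0" "z0 < r" using z0 gp gr by (auto simp: order.order_iff_strict)
  have big: "g x \<noteq> 0" if "r \<le> x" "x \<le> p + 2" for x
  proof -
    have "(x - 2) * f x \<le> 0" using sn[of x] that r p2 by (simp add: mult_nonneg_nonpos)
    moreover have "2 * (p - x) < 0" using that(1) r(1) by simp
    ultimately have "g x < 0" unfolding g_def by (intro add_neg_nonpos)
    then show ?thesis by simp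
  qed
  have k: "(y - 2) / (y - p) = 2 / f y" if "p < y" "y < r" "g y = 0" for y
  proof -
    have "(y - 2) * f y = 2 * (y - p)" using that unfolding g_def by (simp add: algebra_simps)
    then show ?thesis using that sp[of y] by (simp add: field_simps)
  qed
  have mono: "\<not> (g u = 0 \<and> g w = 0)" if "p < u" "u < w" "w < r" for u w
  proof
    assume "g u = 0 \<and> g w = 0"
    then have e: "(u - 2) / (u - p) = 2 / f u" "(w - 2) / (w - p) = 2 / f w" using k that by auto
    have "1 / f u < 1 / f w" using recip_mono_pos[of "f w" "f u"] sp[of w] d[of u w] that r by auto
    then have "2 * (1 / f u) < 2 * (1 / f w)" by simp
    then have "2 / f u < 2 / f w" by simp
    moreover have "(w - 2) / (w - p) < (u - 2) / (u - p)" using frac_dec[of p u w] p2 that by auto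
    ultimately show False using e by linarith
  qed
  have "\<forall>x. p < x \<and> x \<le> p + 2 \<and> g x = 0 \<longrightarrow> x = z0"
  proof (intro allI impI)
    fix x assume x: "p < x \<and> x \<le> p + 2 \<and> g x = 0"
    show "x = z0"
    proof (rule ccontr)
      assume ne: "x \<noteq> z0"
      have "x < r"
      proof (rule ccontr)
        assume "\<not> x < r"
        then have "r \<le> x" by simp
        then show False using big[of x] x by blast
      qed
      then show False using mono[of x z0] mono[of z0 x] x z0 zz ne by (cases "x < z0") auto
    qed
  qed
  then show ?thesis using zz z0 unfolding g_def by blast
qed


locale gr =
  fixes p q1 q2 :: nat
  assumes p6: "p \<ge> 6" and q13: "q1 \<ge> 3" and q23: "q2 \<ge> 3"
begin

abbreviation "V \<equiv> verts p q1 q2"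
abbreviation "e \<equiv> - int q1 - int p + 2"
abbreviation "I \<equiv> {- int p + 2 .. -1}"

lemma adj_iff: "adj p q1 q2 i j \<longleftrightarrow> i \<in> V \<and> j \<in> V \<and> i \<noteq> j \<and>
   ((i \<in> {- int p + 1 .. 0} \<and> j \<in> {- int p + 1 .. 0}) \<or> \<bar>i - j\<bar> = 1)"
proof
  assume "adj p q1 q2 i j"
  then show "i \<in> V \<and> j \<in> V \<and> i \<noteq> j \<and>
   ((i \<in> {- int p + 1 .. 0} \<and> j \<in> {- int p + 1 .. 0}) \<or> \<bar>i - j\<bar> = 1)"
    unfolding adj_def by (auto simp: doubleton_eq_iff)
next
  assume h: "i \<in> V \<and> j \<in> V \<and> i \<noteq> j \<and>
   ((i \<in> {- int p + 1 .. 0} \<and> j \<in> {- int p + 1 .. 0}) \<or> \<bar>i - j\<bar> = 1)"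
  show "adj p q1 q2 i j"
  proof (cases "i \<in> {- int p + 1 .. 0} \<and> j \<in> {- int p + 1 .. 0}")
    case True then show ?thesis using h unfolding adj_def by blast
  next
    case False
    then have d: "\<bar>i - j\<bar> = 1" using h by blast
    define k where "k = min i j"
    have "j = i + 1 \<or> i = j + 1" using d by arith
    then have ij: "{i, j} = {k, k+1}" using k_def by auto
    have "k \<in> {i, j}" "k + 1 \<in> {i, j}" using ij by blast+
    then have kV: "k \<in> V" "k + 1 \<in> V" using h by auto
    have nK: "\<not> (- int p + 1 \<le> k \<and> k \<le> -1)" using False ij d k_def by (auto simp: min_def abs_if)
    consider "k = - int p" | "k = 0" | "k \<le> - int p - 1" | "k \<ge> 1" using nK by linarith
    then show ?thesis
    proof cases
      case 1 then show ?thesis using h ij unfolding adj_def by auto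
    next
      case 2 then show ?thesis using h ij unfolding adj_def by auto
    next
      case 3
      have "- int q1 - int p + 2 \<le> k" using kV by (simp add: verts_def)
      then show ?thesis using h ij 3 unfolding adj_def by blast
    next
      case 4
      have "k \<le> int q2 - 2" using kV by (simp add: verts_def)
      then show ?thesis using h ij 4 unfolding adj_def by blast
    qed
  qed
qed

lemma finV: "finite V" by (simp add: verts_def)

lemma lap_nb:
  assumes iV: "i \<in> V"
  shows "lap_apply p q1 q2 v i = (\<Sum>j\<in>{j\<in>V. adj p q1 q2 i j}. v i - v j)"
proof -
  let ?N = "{j\<in>V. adj p q1 q2 i j}"
  have fN: "finite ?N" using finV by simp
  have "lap_apply p q1 q2 v i = lap p q1 q2 i i * v i + (\<Sum>j\<in>V-{i}. lap p q1 q2 i j * v j)"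
    unfolding lap_apply_def using iV finV by (simp add: sum.remove)
  also have "(\<Sum>j\<in>V-{i}. lap p q1 q2 i j * v j) = (\<Sum>j\<in>V-{i}. if adj p q1 q2 i j then - v j else 0)"
    by (intro sum.cong) (auto simp: lap_def)
  also have "\<dots> = (\<Sum>j\<in>{j\<in>V-{i}. adj p q1 q2 i j}. - v j)"
    using sum.inter_filter[of "V-{i}" "\<lambda>j. - v j" "\<lambda>j. adj p q1 q2 i j"] finV by simp
  also have "{j\<in>V-{i}. adj p q1 q2 i j} = ?N" by (auto simp: adj_iff)
  also have "lap p q1 q2 i i = real (card ?N)" by (simp add: lap_def degree_def)
  finally show ?thesis by (simp add: sum_subtractf sum_negf)
qed

lemma N_left_end: "{j\<in>V. adj p q1 q2 e j} = {e + 1}"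
  using p6 q13 q23 by (auto simp: adj_iff verts_def)

lemma N_left: "e < i \<Longrightarrow> i \<le> - int p \<Longrightarrow> {j\<in>V. adj p q1 q2 i j} = {i - 1, i + 1}"
  using p6 q13 q23 by (auto simp: adj_iff verts_def)

lemma N_right: "1 \<le> i \<Longrightarrow> i < int q2 - 1 \<Longrightarrow> {j\<in>V. adj p q1 q2 i j} = {i - 1, i + 1}"
  using p6 q13 q23 by (auto simp: adj_iff verts_def)

lemma N_right_end: "{j\<in>V. adj p q1 q2 (int q2 - 1) j} = {int q2 - 2}"
  using p6 q13 q23 by (auto simp: adj_iff verts_def)

lemma N_a: "{j\<in>V. adj p q1 q2 (- int p + 1) j} = insert (- int p) {- int p + 2 .. 0}"
  using p6 q13 q23 by (auto simp: adj_iff verts_def)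

lemma N_b: "{j\<in>V. adj p q1 q2 0 j} = insert 1 {- int p + 1 .. -1}"
  using p6 q13 q23 by (auto simp: adj_iff verts_def)

lemma N_int: "i \<in> I \<Longrightarrow> {j\<in>V. adj p q1 q2 i j} = {- int p + 1 .. 0} - {i}"
  using p6 q13 q23 by (auto simp: adj_iff verts_def)

end

lemma path_gen:
  assumes f1: "m \<ge> 1 \<Longrightarrow> f 1 = (t - 1) * f 0"
    and fr: "\<And>j. 1 \<le> j \<Longrightarrow> j + 1 \<le> m \<Longrightarrow> f (j + 1) = t * f j - f (j - 1)"
  shows "j \<le> m \<Longrightarrow> f j = f 0 * pseq t j"
proof (induction j rule: nat_less_induct)
  case (1 n)
  show ?case
  proof (cases n)
    case 0 then show ?thesis by simp
  next
    case (Suc k)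
    show ?thesis
    proof (cases k)
      case 0 then show ?thesis using Suc f1 1(2) by simp
    next
      case (Suc l)
      have "f (Suc k) = t * f k - f (k - 1)" using fr[of k] Suc `n = Suc k` 1(2) by simp
      moreover have "f k = f 0 * pseq t k" using 1(1)[rule_format, of k] 1(2) `n = Suc k` by simp
      moreover have "f l = f 0 * pseq t l" using 1(1)[rule_format, of l] 1(2) `n = Suc k` Suc by simp
      ultimately show ?thesis using Suc `n = Suc k` by (simp add: algebra_simps)
    qed
  qed
qed

context gr
begin

lemma eV: "e \<in> V" using q13 q23 by (simp add: verts_def)

lemma lap_left_end: "lap_apply p q1 q2 v e = v e - v (e + 1)"
  using lap_nb[OF eV, of v] N_left_end by simp

lemma lap_left: "e < i \<Longrightarrow> i \<le> - int p \<Longrightarrow> lap_apply p q1 q2 v i = 2 * v i - v (i - 1) - v (i + 1)"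
proof -
  assume a: "e < i" "i \<le> - int p"
  have "i \<in> V" using a q23 by (simp add: verts_def)
  then show ?thesis using lap_nb[of i v] N_left[OF a] by simp
qed

lemma lap_right: "1 \<le> i \<Longrightarrow> i < int q2 - 1 \<Longrightarrow> lap_apply p q1 q2 v i = 2 * v i - v (i - 1) - v (i + 1)"
proof -
  assume a: "1 \<le> i" "i < int q2 - 1"
  have "i \<in> V" using a p6 q13 q23 by (simp add: verts_def)
  then show ?thesis using lap_nb[of i v] N_right[OF a] by simp
qed

lemma lap_right_end: "lap_apply p q1 q2 v (int q2 - 1) = v (int q2 - 1) - v (int q2 - 2)"
proof -
  have "int q2 - 1 \<in> V" using q23 by (simp add: verts_def)
  then show ?thesis using lap_nb[of "int q2 - 1" v] N_right_end by simp
qed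

lemma lap_a: "lap_apply p q1 q2 v (- int p + 1) =
    (v (- int p + 1) - v (- int p)) + (\<Sum>j\<in>{- int p + 2 .. 0}. v (- int p + 1) - v j)"
proof -
  have "- int p + 1 \<in> V" using p6 q13 q23 by (simp add: verts_def)
  then show ?thesis using lap_nb[of "- int p + 1" v] N_a by simp
qed

lemma lap_b: "lap_apply p q1 q2 v 0 = (v 0 - v 1) + (\<Sum>j\<in>{- int p + 1 .. -1}. v 0 - v j)"
proof -
  have "0 \<in> V" using q13 q23 by (simp add: verts_def)
  then show ?thesis using lap_nb[of 0 v] N_b by simp
qed

lemma lap_int: "i \<in> I \<Longrightarrow> lap_apply p q1 q2 v i = (\<Sum>j\<in>{- int p + 1 .. 0} - {i}. v i - v j)"
proof -
  assume a: "i \<in> I"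
  have "i \<in> V" using a q13 q23 by (simp add: verts_def)
  then show ?thesis using lap_nb[of i v] N_int[OF a] by simp
qed

lemma cardI: "real (card I) = real p - 2"
  using p6 by simp

lemma cs_a:
  fixes v :: "int \<Rightarrow> real"
  assumes hc: "\<forall>j\<in>I. v j = c"
  shows "(\<Sum>j\<in>{- int p + 2 .. 0}. x - v j) = (real p - 2) * (x - c) + (x - v 0)"
proof -
  have s: "{- int p + 2 .. 0} = insert 0 I" using p6 by auto
  have "(\<Sum>j\<in>{- int p + 2 .. 0}. x - v j) = (x - v 0) + (\<Sum>j\<in>I. x - v j)"
    unfolding s by (subst sum.insert) auto
  also have "(\<Sum>j\<in>I. x - v j) = (\<Sum>j\<in>I. x - c)" using hc by (intro sum.cong) auto
  also have "\<dots> = (real p - 2) * (x - c)" using cardI by simp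
  finally show ?thesis by simp
qed

lemma cs_b:
  fixes v :: "int \<Rightarrow> real"
  assumes hc: "\<forall>j\<in>I. v j = c"
  shows "(\<Sum>j\<in>{- int p + 1 .. -1}. x - v j) = (real p - 2) * (x - c) + (x - v (- int p + 1))"
proof -
  have s: "{- int p + 1 .. -1} = insert (- int p + 1) I" using p6 by auto
  have "(\<Sum>j\<in>{- int p + 1 .. -1}. x - v j) = (x - v (- int p + 1)) + (\<Sum>j\<in>I. x - v j)"
    unfolding s by (subst sum.insert) auto
  also have "(\<Sum>j\<in>I. x - v j) = (\<Sum>j\<in>I. x - c)" using hc by (intro sum.cong) auto
  also have "\<dots> = (real p - 2) * (x - c)" using cardI by simp
  finally show ?thesis by simp
qed

lemma cs_int:
  fixes v :: "int \<Rightarrow> real"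
  assumes hc: "\<forall>j\<in>I. v j = c" and i: "i \<in> I"
  shows "(\<Sum>j\<in>{- int p + 1 .. 0} - {i}. v i - v j) = 2 * c - v (- int p + 1) - v 0"
proof -
  have s: "{- int p + 1 .. 0} - {i} = insert (- int p + 1) (insert 0 (I - {i}))" using p6 i by auto
  have "(\<Sum>j\<in>{- int p + 1 .. 0} - {i}. v i - v j) =
        (v i - v (- int p + 1)) + ((v i - v 0) + (\<Sum>j\<in>I - {i}. v i - v j))"
    unfolding s using p6 by (simp add: sum.insert)
  also have "(\<Sum>j\<in>I - {i}. v i - v j) = 0" using hc i by (intro sum.neutral) auto
  finally show ?thesis using hc i by simp
qed

lemma left_path:
  assumes eq: "\<forall>i\<in>V. lap_apply p q1 q2 v i = lam * v i"
  shows "j \<le> q1 - 1 \<Longrightarrow> v (e + int j) = v e * pseq (2 - lam) j"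
proof -
  define f where "f j = v (e + int j)" for j
  have "f j = f 0 * pseq (2 - lam) j" if "j \<le> q1 - 1"
  proof (rule path_gen[of "q1 - 1" f "2 - lam"])
    show "f 1 = (2 - lam - 1) * f 0"
    proof -
      have "lap_apply p q1 q2 v e = lam * v e" using eq eV by blast
      then show ?thesis using lap_left_end[of v] unfolding f_def by (simp add: algebra_simps)
    qed
  next
    fix j assume j: "1 \<le> j" "j + 1 \<le> q1 - 1"
    define i where "i = e + int j"
    have i1: "e < i" "i \<le> - int p" using j i_def by auto
    have iV: "i \<in> V" using i1 q23 by (simp add: verts_def)
    have "lap_apply p q1 q2 v i = lam * v i" using eq iV by blast
    then have "2 * v i - v (i - 1) - v (i + 1) = lam * v i" using lap_left[OF i1] by simp
    moreover have "f (j + 1) = v (i + 1)" "f j = v i" "f (j - 1) = v (i - 1)"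
      unfolding f_def i_def using j by (auto simp: of_nat_diff algebra_simps)
    ultimately show "f (j + 1) = (2 - lam) * f j - f (j - 1)" by (simp add: algebra_simps)
  next
    show "j \<le> q1 - 1" using that .
  qed
  then show "j \<le> q1 - 1 \<Longrightarrow> v (e + int j) = v e * pseq (2 - lam) j" unfolding f_def by simp
qed

lemma right_path:
  assumes eq: "\<forall>i\<in>V. lap_apply p q1 q2 v i = lam * v i"
  shows "j \<le> q2 - 1 \<Longrightarrow> v (int q2 - 1 - int j) = v (int q2 - 1) * pseq (2 - lam) j"
proof -
  define f where "f j = v (int q2 - 1 - int j)" for j
  have "f j = f 0 * pseq (2 - lam) j" if "j \<le> q2 - 1"
  proof (rule path_gen[of "q2 - 1" f "2 - lam"])
    show "f 1 = (2 - lam - 1) * f 0"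
    proof -
      have "int q2 - 1 \<in> V" using q23 by (simp add: verts_def)
      then have "lap_apply p q1 q2 v (int q2 - 1) = lam * v (int q2 - 1)" using eq by blast
      then show ?thesis using lap_right_end[of v] unfolding f_def by (simp add: algebra_simps)
    qed
  next
    fix j assume j: "1 \<le> j" "j + 1 \<le> q2 - 1"
    define i where "i = int q2 - 1 - int j"
    have i1: "1 \<le> i" "i < int q2 - 1" using j i_def by auto
    have iV: "i \<in> V" using i1 p6 q13 q23 by (simp add: verts_def)
    have "lap_apply p q1 q2 v i = lam * v i" using eq iV by blast
    then have "2 * v i - v (i - 1) - v (i + 1) = lam * v i" using lap_right[OF i1] by simp
    moreover have "f (j + 1) = v (i - 1)" "f j = v i" "f (j - 1) = v (i + 1)"
      unfolding f_def i_def using j by (auto simp: of_nat_diff algebra_simps)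
    ultimately show "f (j + 1) = (2 - lam) * f j - f (j - 1)" by (simp add: algebra_simps)
  next
    show "j \<le> q2 - 1" using that .
  qed
  then show "j \<le> q2 - 1 \<Longrightarrow> v (int q2 - 1 - int j) = v (int q2 - 1) * pseq (2 - lam) j"
    unfolding f_def by simp
qed

lemma mult_ind: "(x::real) * (if P then 1 else 0) = (if P then x else 0)" by simp

lemma IV: "I \<subseteq> V" using q13 q23 by (auto simp: verts_def)

lemma perp_const:
  fixes v :: "int \<Rightarrow> real"
  assumes v: "v \<in> EK_perp p q1 q2" and i: "i \<in> I" and j: "j \<in> I"
  shows "v i = v j"
proof (cases "i = j")
  case True then show ?thesis by simp
next
  case False
  define w where "w k = (if k = i then 1 else 0) - (if k = j then (1::real) else 0)" for k
  have "w \<in> EK p q1 q2"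
    unfolding EK_def is_vec_def
  proof (intro CollectI conjI allI impI)
    fix k assume "k \<notin> V" then show "w k = 0" using i j IV unfolding w_def by auto
  next
    fix k assume "k \<notin> I" then show "w k = 0" using i j unfolding w_def by auto
  next
    show "(\<Sum>k\<in>I. w k) = 0" unfolding w_def using i j by (simp add: sum_subtractf)
  qed
  then have "vinner p q1 q2 v w = 0" using v unfolding EK_perp_def by blast
  moreover have "vinner p q1 q2 v w = v i - v j"
    unfolding vinner_def w_def using i j IV finV
    by (simp add: right_diff_distrib sum_subtractf subset_iff mult_ind)
  ultimately show ?thesis by simp
qed

lemma const_perp:
  fixes v :: "int \<Rightarrow> real"
  assumes iv: "is_vec p q1 q2 v" and hc: "\<forall>k\<in>I. v k = c"
  shows "v \<in> EK_perp p q1 q2"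
  unfolding EK_perp_def
proof (intro CollectI conjI ballI)
  show "is_vec p q1 q2 v" by (rule iv)
next
  fix w assume w: "w \<in> EK p q1 q2"
  have "vinner p q1 q2 v w = (\<Sum>k\<in>I. v k * w k)"
  proof -
    have wz: "\<forall>k. k \<notin> I \<longrightarrow> w k = 0" using w by (simp add: EK_def)
    have "\<forall>k\<in>V - I. v k * w k = 0" using wz by auto
    then show ?thesis unfolding vinner_def
      using sum.mono_neutral_right[OF finV IV, of "\<lambda>k. v k * w k"] by simp
  qed
  also have "\<dots> = (\<Sum>k\<in>I. c * w k)" using hc by (intro sum.cong) auto
  also have "\<dots> = c * (\<Sum>k\<in>I. w k)" by (simp add: sum_distrib_left)
  also have "\<dots> = 0" using w by (simp add: EK_def)
  finally show "vinner p q1 q2 v w = 0" .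
qed

end

lemma sys_alg:
  fixes Q1 Q2 P t a b c :: real
  assumes e0: "t * c = a + b" and e1: "Q1 * a + P * c + b = 0" and e2: "Q2 * b + P * c + a = 0"
  shows "(Q1 * t + P) * a + (P + t) * b = 0" "(P + t) * a + (Q2 * t + P) * b = 0"
proof -
  have "(Q1 * t + P) * a + (P + t) * b = t * (Q1 * a + P * c + b) + P * (a + b - t * c)"
    by (simp add: algebra_simps)
  then show "(Q1 * t + P) * a + (P + t) * b = 0" using e0 e1 by simp
  have "(P + t) * a + (Q2 * t + P) * b = t * (Q2 * b + P * c + a) + P * (a + b - t * c)"
    by (simp add: algebra_simps)
  then show "(P + t) * a + (Q2 * t + P) * b = 0" using e0 e2 by simp
qed

lemma det_alg:
  fixes Q1 Q2 P t a b :: real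
  assumes r1: "(Q1 * t + P) * a + (P + t) * b = 0" and r2: "(P + t) * a + (Q2 * t + P) * b = 0"
  shows "a * (t * (P * (2 - Q1 - Q2) - t * (Q1 * Q2 - 1))) = 0"
    "b * (t * (P * (2 - Q1 - Q2) - t * (Q1 * Q2 - 1))) = 0"
proof -
  have "a * (t * (P * (2 - Q1 - Q2) - t * (Q1 * Q2 - 1))) =
        (P + t) * ((P + t) * a + (Q2 * t + P) * b) - (Q2 * t + P) * ((Q1 * t + P) * a + (P + t) * b)"
    by (simp add: algebra_simps)
  then show "a * (t * (P * (2 - Q1 - Q2) - t * (Q1 * Q2 - 1))) = 0" using r1 r2 by simp
  have "b * (t * (P * (2 - Q1 - Q2) - t * (Q1 * Q2 - 1))) =
        (P + t) * ((Q1 * t + P) * a + (P + t) * b) - (Q1 * t + P) * ((P + t) * a + (Q2 * t + P) * b)"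
    by (simp add: algebra_simps)
  then show "b * (t * (P * (2 - Q1 - Q2) - t * (Q1 * Q2 - 1))) = 0" using r1 r2 by simp
qed

context gr
begin

lemma eig_struct:
  fixes v :: "int \<Rightarrow> real"
  assumes lam: "lam > 4" and ev: "eigvec_EKperp p q1 q2 lam v"
  shows "(\<forall>j\<le>q1-1. v (e + int j) = v e * pseq (2-lam) j)
   \<and> (\<forall>j\<le>q2-1. v (int q2 - 1 - int j) = v (int q2 - 1) * pseq (2-lam) j)
   \<and> (\<forall>k\<in>I. v k = v (-1))
   \<and> (2 - lam) * v (-1) = v (- int p + 1) + v 0
   \<and> Qf p q1 lam * v (- int p + 1) + (real p - 2) * v (-1) + v 0 = 0
   \<and> Qf p q2 lam * v 0 + (real p - 2) * v (-1) + v (- int p + 1) = 0"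
proof -
  define t where "t = 2 - lam"
  have t: "t < -2" using lam t_def by simp
  have eq: "\<forall>i\<in>V. lap_apply p q1 q2 v i = lam * v i" using ev unfolding eigvec_EKperp_def by blast
  have perp: "v \<in> EK_perp p q1 q2" using ev unfolding eigvec_EKperp_def by blast
  have m1I: "-1 \<in> I" using p6 by simp
  have L: "\<forall>j\<le>q1-1. v (e + int j) = v e * pseq t j" using left_path[OF eq] t_def by simp
  have R: "\<forall>j\<le>q2-1. v (int q2 - 1 - int j) = v (int q2 - 1) * pseq t j" using right_path[OF eq] t_def by simp
  have hc: "\<forall>k\<in>I. v k = v (-1)" using perp_const[OF perp _ m1I] by blast
  define a where "a = v (- int p + 1)"
  define b where "b = v 0"
  define c where "c = v (-1)"
  have "lap_apply p q1 q2 v (-1) = lam * v (-1)" using eq IV m1I by blast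
  then have "2 * c - a - b = lam * c" using lap_int[OF m1I, of v] cs_int[OF hc m1I] a_def b_def c_def by simp
  then have E0: "t * c = a + b" unfolding t_def by (simp add: algebra_simps)
  have ia: "e + int (q1 - 2) = - int p" "e + int (q1 - 1) = - int p + 1" using q13 by auto
  have "v (- int p) = v e * pseq t (q1 - 2)" using L ia(1) by (metis diff_le_mono2 one_le_numeral)
  also have "pseq t (q1 - 2) = rr t (q1 - 1) * pseq t (q1 - 1)"
    using pseq_rr[OF t, of "q1 - 2"] q13 by (simp add: Suc_diff_Suc numeral_2_eq_2)
  finally have vp: "v (- int p) = rr t (q1 - 1) * a"
    using L ia(2) unfolding a_def by (metis le_refl mult.commute mult.left_commute)
  have aV: "- int p + 1 \<in> V" using p6 q13 q23 by (simp add: verts_def)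
  have "lap_apply p q1 q2 v (- int p + 1) = lam * a" using eq aV a_def by blast
  then have "(a - rr t (q1 - 1) * a) + ((real p - 2) * (a - c) + (a - b)) = lam * a"
    using lap_a[of v] cs_a[OF hc, of a] vp a_def b_def c_def by simp
  moreover have Q1: "Qf p q1 lam = rr t (q1 - 1) + lam - real p" using Qf_rr[OF lam] q13 t_def by simp
  moreover have "(rr t (q1 - 1) + lam - real p) * a + (real p - 2) * c + b = 0"
    using calculation(1) by (simp add: algebra_simps)
  ultimately have E1: "Qf p q1 lam * a + (real p - 2) * c + b = 0" by simp
  have ib: "int q2 - 1 - int (q2 - 2) = 1" "int q2 - 1 - int (q2 - 1) = 0" using q23 by auto
  have "v 1 = v (int q2 - 1) * pseq t (q2 - 2)" using R ib(1) by (metis diff_le_mono2 one_le_numeral)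
  also have "pseq t (q2 - 2) = rr t (q2 - 1) * pseq t (q2 - 1)"
    using pseq_rr[OF t, of "q2 - 2"] q23 by (simp add: Suc_diff_Suc numeral_2_eq_2)
  finally have v1: "v 1 = rr t (q2 - 1) * b"
    using R ib(2) unfolding b_def by (metis le_refl mult.commute mult.left_commute)
  have bV: "0 \<in> V" using p6 q13 q23 by (simp add: verts_def)
  have "lap_apply p q1 q2 v 0 = lam * b" using eq bV b_def by blast
  then have "(b - rr t (q2 - 1) * b) + ((real p - 2) * (b - c) + (b - a)) = lam * b"
    using lap_b[of v] cs_b[OF hc, of b] v1 a_def b_def c_def by simp
  moreover have Q2: "Qf p q2 lam = rr t (q2 - 1) + lam - real p" using Qf_rr[OF lam] q23 t_def by simp
  moreover have "(rr t (q2 - 1) + lam - real p) * b + (real p - 2) * c + a = 0"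
    using calculation(1) by (simp add: algebra_simps)
  ultimately have E2: "Qf p q2 lam * b + (real p - 2) * c + a = 0" by simp
  show ?thesis using L R hc E0 E1 E2 unfolding t_def a_def b_def c_def by blast
qed

lemma vert_cases:
  assumes "i \<in> V"
  obtains (L) j where "j \<le> q1 - 1" "i = e + int j"
    | (M) "i \<in> I"
    | (R) j where "j \<le> q2 - 1" "i = int q2 - 1 - int j"
proof -
  have b: "e \<le> i" "i \<le> int q2 - 1" using assms by (auto simp: verts_def)
  consider "i \<le> - int p + 1" | "i \<in> I" | "0 \<le> i" by fastforce
  then show ?thesis
  proof cases
    case 1
    then have "nat (i - e) \<le> q1 - 1" "i = e + int (nat (i - e))" using b q13 by auto
    then show ?thesis using that(1) by blast
  next
    case 2 then show ?thesis using that(2) by blast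
  next
    case 3
    then have "nat (int q2 - 1 - i) \<le> q2 - 1" "i = int q2 - 1 - int (nat (int q2 - 1 - i))" using b q23 by auto
    then show ?thesis using that(3) by blast
  qed
qed

lemma D_of_eig:
  fixes v :: "int \<Rightarrow> real"
  assumes lam: "lam > 4" and ev: "eigvec_EKperp p q1 q2 lam v"
  shows "Dfun q1 p q2 lam = 0"
proof (rule ccontr)
  assume D: "Dfun q1 p q2 lam \<noteq> 0"
  define t where "t = 2 - lam"
  have t: "t < -2" using lam t_def by simp
  note S = eig_struct[OF lam ev]
  define a where "a = v (- int p + 1)"
  define b where "b = v 0"
  define c where "c = v (-1)"
  have E0: "t * c = a + b" using S unfolding t_def a_def b_def c_def by blast
  have E1: "Qf p q1 lam * a + (real p - 2) * c + b = 0" using S unfolding a_def b_def c_def by blast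
  have E2: "Qf p q2 lam * b + (real p - 2) * c + a = 0" using S unfolding a_def b_def c_def by blast
  note r = sys_alg[OF E0 E1 E2]
  note dd = det_alg[OF r]
  have Dt: "t * Dfun q1 p q2 lam \<noteq> 0" using D t by simp
  have "t * ((real p - 2) * (2 - Qf p q1 lam - Qf p q2 lam) - t * (Qf p q1 lam * Qf p q2 lam - 1)) \<noteq> 0"
    using Dt unfolding Dfun_def t_def by simp
  then have a0: "a = 0" and b0: "b = 0" using dd by auto
  then have c0: "c = 0" using E0 t by simp
  have ia: "e + int (q1 - 1) = - int p + 1" using q13 by auto
  have ib: "int q2 - 1 - int (q2 - 1) = 0" using q23 by auto
  have "v e * pseq t (q1 - 1) = 0" using S a0 ia unfolding a_def t_def by (metis le_refl)
  then have ve: "v e = 0" using pseq_nz[OF t] by simp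
  have "v (int q2 - 1) * pseq t (q2 - 1) = 0" using S b0 ib unfolding b_def t_def by (metis le_refl)
  then have vr: "v (int q2 - 1) = 0" using pseq_nz[OF t] by simp
  have "\<forall>i. v i = 0"
  proof
    fix i show "v i = 0"
    proof (cases "i \<in> V")
      case False then show ?thesis using ev unfolding eigvec_EKperp_def is_vec_def by blast
    next
      case True
      then show ?thesis
      proof (cases rule: vert_cases)
        case (L j) then show ?thesis using S ve by simp
      next
        case M then show ?thesis using S c0 unfolding c_def by simp
      next
        case (R j) then show ?thesis using S vr by simp
      qed
    qed
  qed
  then have "v = (\<lambda>_. 0)" by auto
  then show False using ev unfolding eigvec_EKperp_def by blast
qed

lemma eig_of_D:
  assumes lam: "lam > 4" and D: "Dfun q1 p q2 lam = 0" and lp: "lam \<noteq> real p"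
  shows "\<exists>v. eigvec_EKperp p q1 q2 lam v"
proof -
  define t where "t = 2 - lam"
  have t: "t < -2" using lam t_def by simp
  define P where "P = real p - 2"
  define Q1 where "Q1 = Qf p q1 lam"
  define Q2 where "Q2 = Qf p q2 lam"
  define a where "a = P + t"
  define b where "b = - (Q1 * t + P)"
  define c where "c = (a + b) / t"
  have a0: "a \<noteq> 0" using lp unfolding a_def P_def t_def by simp
  have E0: "t * c = a + b" using t unfolding c_def by simp
  have r1: "(Q1 * t + P) * a + (P + t) * b = 0" unfolding a_def b_def by (simp add: algebra_simps)
  have "(P + t) * a + (Q2 * t + P) * b = t * ((P * (2 - Q1 - Q2)) - t * (Q1 * Q2 - 1))"
    unfolding a_def b_def by (simp add: algebra_simps)
  also have "\<dots> = 0" using D unfolding Dfun_def P_def Q1_def Q2_def t_def by simp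
  finally have r2: "(P + t) * a + (Q2 * t + P) * b = 0" .
  have "t * (Q1 * a + P * c + b) = (Q1 * t + P) * a + (P + t) * b - P * (a + b - t * c)"
    by (simp add: algebra_simps)
  then have "t * (Q1 * a + P * c + b) = 0" using r1 E0 by simp
  then have E1: "Q1 * a + P * c + b = 0" using t by simp
  have "t * (Q2 * b + P * c + a) = (P + t) * a + (Q2 * t + P) * b - P * (a + b - t * c)"
    by (simp add: algebra_simps)
  then have "t * (Q2 * b + P * c + a) = 0" using r2 E0 by simp
  then have E2: "Q2 * b + P * c + a = 0" using t by simp
  define yL where "yL = a / pseq t (q1 - 1)"
  define yR where "yR = b / pseq t (q2 - 1)"
  define v where "v k = (if k \<in> V then (if k \<le> - int p + 1 then yL * pseq t (nat (k - e))
      else if 0 \<le> k then yR * pseq t (nat (int q2 - 1 - k)) else c) else 0)" for k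
  have vL: "v k = yL * pseq t (nat (k - e))" if "e \<le> k" "k \<le> - int p + 1" for k
    using that p6 q13 q23 unfolding v_def by (auto simp: verts_def)
  have vR: "v k = yR * pseq t (nat (int q2 - 1 - k))" if "0 \<le> k" "k \<le> int q2 - 1" for k
    using that p6 q13 q23 unfolding v_def by (auto simp: verts_def)
  have vI: "\<forall>k\<in>I. v k = c" unfolding v_def using IV by auto
  have ps1: "pseq t (q1 - 1) \<noteq> 0" "pseq t (q2 - 1) \<noteq> 0" using pseq_nz[OF t] by auto
  have va: "v (- int p + 1) = a"
  proof -
    have "nat (- int p + 1 - e) = q1 - 1" using q13 by auto
    then show ?thesis using vL[of "- int p + 1"] q13 ps1 unfolding yL_def by auto
  qed
  have vb: "v 0 = b"
  proof -
    have "nat (int q2 - 1 - 0) = q2 - 1" using q23 by auto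
    then show ?thesis using vR[of 0] q23 ps1 unfolding yR_def by auto
  qed
  have vp: "v (- int p) = rr t (q1 - 1) * a"
  proof -
    have "nat (- int p - e) = q1 - 2" using q13 by auto
    then have "v (- int p) = yL * pseq t (q1 - 2)" using vL[of "- int p"] q13 by auto
    also have "pseq t (q1 - 2) = rr t (q1 - 1) * pseq t (q1 - 1)"
      using pseq_rr[OF t, of "q1 - 2"] q13 by (simp add: Suc_diff_Suc numeral_2_eq_2)
    finally show ?thesis using ps1 unfolding yL_def by simp
  qed
  have v1: "v 1 = rr t (q2 - 1) * b"
  proof -
    have "nat (int q2 - 1 - 1) = q2 - 2" using q23 by auto
    then have "v 1 = yR * pseq t (q2 - 2)" using vR[of 1] q23 by auto
    also have "pseq t (q2 - 2) = rr t (q2 - 1) * pseq t (q2 - 1)"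
      using pseq_rr[OF t, of "q2 - 2"] q23 by (simp add: Suc_diff_Suc numeral_2_eq_2)
    finally show ?thesis using ps1 unfolding yR_def by simp
  qed
  have Q1r: "Q1 = rr t (q1 - 1) + lam - real p" using Qf_rr[OF lam] q13 unfolding Q1_def t_def by simp
  have Q2r: "Q2 = rr t (q2 - 1) + lam - real p" using Qf_rr[OF lam] q23 unfolding Q2_def t_def by simp
  have eqs: "lap_apply p q1 q2 v i = lam * v i" if iV: "i \<in> V" for i
  proof -
    have ib: "e \<le> i" "i \<le> int q2 - 1" using iV by (auto simp: verts_def)
    consider "i = e" | "e < i \<and> i \<le> - int p" | "i = - int p + 1" | "i \<in> I" | "i = 0"
      | "1 \<le> i \<and> i < int q2 - 1" | "i = int q2 - 1" using ib by fastforce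
    then show ?thesis
    proof cases
      case 1
      have "v e = yL" using vL[of e] q13 by simp
      moreover have "v (e + 1) = yL * (t - 1)"
      proof -
        have "nat (e + 1 - e) = Suc 0" by simp
        then show ?thesis using vL[of "e + 1"] q13 by simp
      qed
      ultimately show ?thesis unfolding 1 using lap_left_end[of v] unfolding t_def by (simp add: algebra_simps)
    next
      case 2
      define n where "n = nat (i - e)"
      have ni: "int n = i - e" using 2 n_def by simp
      have n1: "n \<ge> 1" using ni 2 by linarith
      then obtain m where m: "n = Suc m" using not0_implies_Suc by force
      have "v i = yL * pseq t n" using vL[of i] 2 n_def by simp
      moreover have "v (i - 1) = yL * pseq t m"
      proof -
        have "i - 1 - e = int m" using ni m by simp
        then have "nat (i - 1 - e) = m" by simp
        then show ?thesis using vL[of "i - 1"] 2 by simp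
      qed
      moreover have "v (i + 1) = yL * pseq t (Suc n)"
      proof -
        have "i + 1 - e = int (Suc n)" using ni by simp
        then have "nat (i + 1 - e) = Suc n" by (simp only: nat_int)
        then show ?thesis using vL[of "i + 1"] 2 by simp
      qed
      moreover have "pseq t (Suc n) = t * pseq t n - pseq t m" using m by simp
      ultimately show ?thesis using lap_left[of i v] 2 unfolding t_def by (simp add: algebra_simps)
    next
      case 3
      have "lap_apply p q1 q2 v i = (a - rr t (q1 - 1) * a) + (P * (a - c) + (a - b))"
        unfolding 3 using lap_a[of v] cs_a[OF vI, of a] va vb vp unfolding P_def by simp
      also have "\<dots> = lam * a" using E1 Q1r unfolding P_def by (simp add: algebra_simps)
      finally show ?thesis unfolding 3 using va by simp
    next
      case 4
      have "lap_apply p q1 q2 v i = 2 * c - a - b" using lap_int[OF 4, of v] cs_int[OF vI 4] va vb by simp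
      also have "\<dots> = lam * c" using E0 unfolding t_def by (simp add: algebra_simps)
      finally show ?thesis using 4 vI by simp
    next
      case 5
      have "lap_apply p q1 q2 v i = (b - rr t (q2 - 1) * b) + (P * (b - c) + (b - a))"
        unfolding 5 using lap_b[of v] cs_b[OF vI, of b] va vb v1 unfolding P_def by simp
      also have "\<dots> = lam * b" using E2 Q2r unfolding P_def by (simp add: algebra_simps)
      finally show ?thesis unfolding 5 using vb by simp
    next
      case 6
      define n where "n = nat (int q2 - 1 - i)"
      have ni: "int n = int q2 - 1 - i" using 6 n_def by simp
      have n1: "n \<ge> 1" using ni 6 by linarith
      then obtain m where m: "n = Suc m" using not0_implies_Suc by force
      have "v i = yR * pseq t n" using vR[of i] 6 n_def by simp
      moreover have "v (i + 1) = yR * pseq t m"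
      proof -
        have "int q2 - 1 - (i + 1) = int m" using ni m by simp
        then have "nat (int q2 - 1 - (i + 1)) = m" by simp
        then show ?thesis using vR[of "i + 1"] 6 by simp
      qed
      moreover have "v (i - 1) = yR * pseq t (Suc n)"
      proof -
        have "int q2 - 1 - (i - 1) = int (Suc n)" using ni by simp
        then have "nat (int q2 - 1 - (i - 1)) = Suc n" by (simp only: nat_int)
        then show ?thesis using vR[of "i - 1"] 6 by simp
      qed
      moreover have "pseq t (Suc n) = t * pseq t n - pseq t m" using m by simp
      ultimately show ?thesis using lap_right[of i v] 6 unfolding t_def by (simp add: algebra_simps)
    next
      case 7
      have "v (int q2 - 1) = yR" using vR[of "int q2 - 1"] q23 by simp
      moreover have "v (int q2 - 2) = yR * (t - 1)"
      proof -
        have "nat (int q2 - 1 - (int q2 - 2)) = Suc 0" by simp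
        then show ?thesis using vR[of "int q2 - 2"] q23 by simp
      qed
      ultimately show ?thesis unfolding 7 using lap_right_end[of v] unfolding t_def by (simp add: algebra_simps)
    qed
  qed
  have iv: "is_vec p q1 q2 v" unfolding is_vec_def v_def by simp
  have "v \<noteq> (\<lambda>_. 0)" using va a0 by (metis)
  moreover have "v \<in> EK_perp p q1 q2" using const_perp[OF iv vI] .
  ultimately have "eigvec_EKperp p q1 q2 lam v" unfolding eigvec_EKperp_def using iv eqs by blast
  then show ?thesis by blast
qed

end

lemma FA_root:
  assumes "q \<ge> 2" "p \<ge> 4"
  shows "\<exists>r. real p + 1 < r \<and> r < real p + 2 \<and> FA p q r = 0"
proof -
  have p4: "real p \<ge> 4" using assms(2) by simp
  have c: "continuous_on {real p + 1 .. real p + 2} (FA p q)"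
    by (rule continuous_on_subset[OF FA_cont[OF assms(1), of p]]) (use p4 in auto)
  have a1: "FA p q (real p + 1) > 0" using FA_pos[of "real p + 1" p q] assms by simp
  have a2: "FA p q (real p + 2) < 0" using FA_neg[of "real p + 2" p q] assms by simp
  obtain r where r: "real p + 1 \<le> r" "r \<le> real p + 2" "FA p q r = 0"
    using IVT2'[of "FA p q" "real p + 2" 0 "real p + 1"] a1 a2 c by auto
  have "r \<noteq> real p + 1" "r \<noteq> real p + 2" using r a1 a2 by auto
  then have "real p + 1 < r \<and> r < real p + 2 \<and> FA p q r = 0" using r by auto
  then show ?thesis by blast
qed

lemma FA_dec2:
  assumes "q \<ge> 2" "p \<ge> 6"
  shows "\<And>x y. real p \<le> x \<Longrightarrow> x < y \<Longrightarrow> y \<le> real p + 2 \<Longrightarrow> FA p q y < FA p q x"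
  using FA_dec[of _ _ q p] assms by simp

lemma FA_cont2:
  assumes "q \<ge> 2" "p \<ge> 6"
  shows "continuous_on {real p .. real p + 2} (FA p q)"
proof -
  have p4: "real p \<ge> 6" using assms(2) by simp
  show ?thesis by (rule continuous_on_subset[OF FA_cont[OF assms(1), of p]]) (use p4 in auto)
qed

context gr
begin

lemma sym_claims:
  fixes v :: "int \<Rightarrow> real"
  assumes q: "q1 = q2" and lam: "lam > 4" and ev: "eigvec_EKperp p q1 q2 lam v"
  shows "FS p q1 lam = 0 \<Longrightarrow> symmetric_vec p q1 v"
    and "FA p q1 lam = 0 \<Longrightarrow> antisymmetric_vec p q1 v"
proof -
  define t where "t = 2 - lam"
  have t: "t < -2" using lam t_def by simp
  note S = eig_struct[OF lam ev]
  define a where "a = v (- int p + 1)"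
  define b where "b = v 0"
  define c where "c = v (-1)"
  define Q where "Q = Qf p q1 lam"
  define P where "P = real p - 2"
  have E0: "t * c = a + b" using S unfolding t_def a_def b_def c_def by blast
  have E1: "Q * a + P * c + b = 0" using S unfolding Q_def P_def a_def b_def c_def by blast
  have E2: "Q * b + P * c + a = 0" using S q unfolding Q_def P_def a_def b_def c_def by simp
  note r = sys_alg[OF E0 E1 E2]
  have sub: "t * (Q - 1) * (a - b) = 0"
  proof -
    have "t * (Q - 1) * (a - b) = ((Q * t + P) * a + (P + t) * b) - ((P + t) * a + (Q * t + P) * b)"
      by (simp add: algebra_simps)
    then show ?thesis using r by simp
  qed
  have add: "(Q * t + 2 * P + t) * (a + b) = 0"
  proof -
    have "(Q * t + 2 * P + t) * (a + b) = ((Q * t + P) * a + (P + t) * b) + ((P + t) * a + (Q * t + P) * b)"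
      by (simp add: algebra_simps)
    then show ?thesis using r by simp
  qed
  have FSe: "FS p q1 lam = Q * t + 2 * P + t" unfolding FS_def Q_def P_def t_def by (simp add: algebra_simps)
  have FAe: "FA p q1 lam = 1 - Q" unfolding FA_def Q_def by simp
  have notboth: "\<not> (FS p q1 lam = 0 \<and> FA p q1 lam = 0)"
  proof
    assume h: "FS p q1 lam = 0 \<and> FA p q1 lam = 0"
    then have "Q = 1" using FAe by simp
    then have "2 * (real p - lam) = 0" using h FSe unfolding P_def t_def by (simp add: algebra_simps)
    then have "lam = real p" by simp
    then have "FA p q1 lam > 0" using FA_pos[of lam p q1] lam q13 by simp
    then show False using h by simp
  qed
  have ia: "e + int (q1 - 1) = - int p + 1" using q13 by auto
  have ib: "int q2 - 1 - int (q2 - 1) = 0" using q23 by auto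
  have A: "a = v e * pseq t (q1 - 1)" using S ia unfolding a_def t_def by (metis le_refl)
  have B: "b = v (int q2 - 1) * pseq t (q1 - 1)" using S ib q unfolding b_def t_def by (metis le_refl)
  have ps: "pseq t (q1 - 1) \<noteq> 0" using pseq_nz[OF t] by simp
  have pos: "v (- int p + 1 - n) = v e * pseq t (q1 - 1 - nat n) \<and>
             v n = v (int q2 - 1) * pseq t (q1 - 1 - nat n)" if n: "n \<in> {0 .. int q1 - 1}" for n
  proof -
    define j where "j = q1 - 1 - nat n"
    have j: "j \<le> q1 - 1" "j \<le> q2 - 1" using j_def q by auto
    have "e + int j = - int p + 1 - n" using n j_def q13 by auto
    moreover have "int q2 - 1 - int j = n" using n j_def q13 q by auto
    ultimately show ?thesis using S j unfolding j_def t_def by metis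
  qed
  show "FS p q1 lam = 0 \<Longrightarrow> symmetric_vec p q1 v"
  proof -
    assume h: "FS p q1 lam = 0"
    then have "FA p q1 lam \<noteq> 0" using notboth by blast
    then have "Q \<noteq> 1" using FAe by simp
    then have "a = b" using sub t by simp
    then have "v e = v (int q2 - 1)" using A B ps by simp
    then show "symmetric_vec p q1 v" unfolding symmetric_vec_def using pos by simp
  qed
  show "FA p q1 lam = 0 \<Longrightarrow> antisymmetric_vec p q1 v"
  proof -
    assume h: "FA p q1 lam = 0"
    then have "FS p q1 lam \<noteq> 0" using notboth by blast
    then have "Q * t + 2 * P + t \<noteq> 0" using FSe by simp
    then have "a = - b" using add by (simp add: eq_neg_iff_add_eq_0)
    then have "(v e + v (int q2 - 1)) * pseq t (q1 - 1) = 0" using A B by (simp add: algebra_simps)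
    then have "v e = - v (int q2 - 1)" using ps by simp
    then show "antisymmetric_vec p q1 v" unfolding antisymmetric_vec_def using pos by simp
  qed
qed

end

theorem proposition14:
  fixes p q1 q2 :: nat
  assumes "p \<ge> 6" and "q1 \<ge> 3" and "q2 \<ge> 3"
  shows "(\<forall>lam::real. lam > 4 \<longrightarrow>
            ((\<exists>v. eigvec_EKperp p q1 q2 lam v) \<longleftrightarrow> Dfun q1 p q2 lam = 0))
       \<and> card {lam::real. real p < lam \<and> lam \<le> real p + 2 \<and> Dfun q1 p q2 lam = 0} = 2
       \<and> (\<forall>lam::real. (4 < lam \<and> lam \<le> real p) \<or> real p + 2 < lam \<longrightarrow> Dfun q1 p q2 lam \<noteq> 0)
       \<and> (q1 = q2 \<longrightarrow>
            (\<forall>lam::real. lam > 4 \<longrightarrow> Dfun q1 p q1 lam = FA p q1 lam * FS p q1 lam)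
          \<and> (\<forall>lam::real. \<forall>v. lam > 4 \<and> FS p q1 lam = 0 \<and> eigvec_EKperp p q1 q1 lam v
                \<longrightarrow> symmetric_vec p q1 v)
          \<and> (\<forall>lam::real. \<forall>v. lam > 4 \<and> FA p q1 lam = 0 \<and> eigvec_EKperp p q1 q1 lam v
                \<longrightarrow> antisymmetric_vec p q1 v)
          \<and> (\<exists>!lam::real. real p < lam \<and> lam < real p + 2 \<and> FA p q1 lam = 0)
          \<and> (\<forall>lam::real. (4 < lam \<and> lam \<le> real p) \<or> real p + 2 \<le> lam \<longrightarrow> FA p q1 lam \<noteq> 0)
          \<and> (\<exists>!lam::real. real p < lam \<and> lam < real p + 2 \<and> FS p q1 lam = 0)
          \<and> (\<forall>lam::real. (4 < lam \<and> lam \<le> real p) \<or> real p + 2 \<le> lam \<longrightarrow> FS p q1 lam \<noteq> 0))"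
proof -
  interpret G: gr p q1 q2 using assms by unfold_locales
  have p6: "real p \<ge> 6" using assms(1) by simp
  have q1: "q1 \<ge> 2" and q2: "q2 \<ge> 2" using assms by auto
  have Fpos: "FA p q x > 0" if "4 < x" "x \<le> real p" "q \<ge> 2" for x q
    using FA_pos[of x p q] that by simp
  have Fneg: "FA p q x < 0" if "real p + 2 \<le> x" "q \<ge> 2" for x q
    using FA_neg[of x p q] that p6 by simp
  have P3: "\<forall>lam::real. (4 < lam \<and> lam \<le> real p) \<or> real p + 2 < lam \<longrightarrow> Dfun q1 p q2 lam \<noteq> 0"
  proof (intro allI impI)
    fix lam :: real assume h: "(4 < lam \<and> lam \<le> real p) \<or> real p + 2 < lam"
    have "Dfun q1 p q2 lam > 0"
    proof (cases "4 < lam \<and> lam \<le> real p")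
      case True
      have f: "FA p q1 lam > 0" "FA p q2 lam > 0" using Fpos True q1 q2 by auto
      have "(real p - lam) * (FA p q1 lam + FA p q2 lam) \<ge> 0" using True f by simp
      moreover have "(lam - 2) * (FA p q1 lam * FA p q2 lam) > 0" using True f by simp
      ultimately show ?thesis unfolding Dfun_alt by linarith
    next
      case False
      then have l: "real p + 2 < lam" using h by blast
      have f: "FA p q1 lam < 0" "FA p q2 lam < 0" using Fneg l q1 q2 by auto
      have "(real p - lam) * (FA p q1 lam + FA p q2 lam) > 0" using l f by (intro mult_neg_neg) auto
      moreover have "(lam - 2) * (FA p q1 lam * FA p q2 lam) > 0" using l f p6
        by (intro mult_pos_pos mult_neg_neg) auto
      ultimately show ?thesis unfolding Dfun_alt by linarith
    qed
    then show "Dfun q1 p q2 lam \<noteq> 0" by simp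
  qed
  have P1: "\<forall>lam::real. lam > 4 \<longrightarrow> ((\<exists>v. eigvec_EKperp p q1 q2 lam v) \<longleftrightarrow> Dfun q1 p q2 lam = 0)"
  proof (intro allI impI iffI)
    fix lam :: real assume "lam > 4" "\<exists>v. eigvec_EKperp p q1 q2 lam v"
    then show "Dfun q1 p q2 lam = 0" using G.D_of_eig by blast
  next
    fix lam :: real assume l: "lam > 4" and D: "Dfun q1 p q2 lam = 0"
    have "lam \<noteq> real p" using P3 D l by fastforce
    then show "\<exists>v. eigvec_EKperp p q1 q2 lam v" using G.eig_of_D[OF l D] by blast
  qed
  obtain r1 where r1: "real p + 1 < r1" "r1 < real p + 2" "FA p q1 r1 = 0" using FA_root[OF q1, of p] assms by auto
  obtain r2 where r2: "real p + 1 < r2" "r2 < real p + 2" "FA p q2 r2 = 0" using FA_root[OF q2, of p] assms by auto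
  note d1 = FA_dec2[OF q1 assms(1)] and d2 = FA_dec2[OF q2 assms(1)]
  note c1 = FA_cont2[OF q1 assms(1)] and c2 = FA_cont2[OF q2 assms(1)]
  have Dset: "{lam::real. real p < lam \<and> lam \<le> real p + 2 \<and> Dfun q1 p q2 lam = 0} =
      {x. real p < x \<and> x \<le> real p + 2 \<and> (real p - x) * (FA p q1 x + FA p q2 x) + (x - 2) * (FA p q1 x * FA p q2 x) = 0}"
    unfolding Dfun_alt by simp
  have Dset': "{lam::real. real p < lam \<and> lam \<le> real p + 2 \<and> Dfun q1 p q2 lam = 0} =
      {x. real p < x \<and> x \<le> real p + 2 \<and> (real p - x) * (FA p q2 x + FA p q1 x) + (x - 2) * (FA p q2 x * FA p q1 x) = 0}"
    unfolding Dfun_alt by (simp add: algebra_simps)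
  have symc: "q1 = q2 \<Longrightarrow> \<exists>z. real p < z \<and> z < r1 \<and> 2 * (real p - z) + (z - 2) * FA p q1 z = 0 \<and>
           (\<forall>x. real p < x \<and> x \<le> real p + 2 \<and> 2 * (real p - x) + (x - 2) * FA p q1 x = 0 \<longrightarrow> x = z)"
    using sym_roots[of "real p" "FA p q1" r1] p6 c1 d1 r1 by auto
  have FAuniq: "x = r1" if "real p < x" "x \<le> real p + 2" "FA p q1 x = 0" for x
  proof (rule ccontr)
    assume "x \<noteq> r1"
    then consider "x < r1" | "r1 < x" by linarith
    then show False
    proof cases
      case 1 then show False using d1[of x r1] that r1 by simp
    next
      case 2 then show False using d1[of r1 x] that r1 by simp
    qed
  qed
  have P2: "card {lam::real. real p < lam \<and> lam \<le> real p + 2 \<and> Dfun q1 p q2 lam = 0} = 2"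
  proof (cases "q1 = q2")
    case True
    obtain z where z: "real p < z" "z < r1" "2 * (real p - z) + (z - 2) * FA p q1 z = 0"
      and zu: "\<forall>x. real p < x \<and> x \<le> real p + 2 \<and> 2 * (real p - x) + (x - 2) * FA p q1 x = 0 \<longrightarrow> x = z"
      using symc[OF True] by blast
    have Dq: "Dfun q1 p q2 x = FA p q1 x * FS p q1 x" for x using D_sym[of q1 p x] True by simp
    have FSz: "FS p q1 z = 0" using z unfolding FS_alt by simp
    have "{lam::real. real p < lam \<and> lam \<le> real p + 2 \<and> Dfun q1 p q2 lam = 0} = {r1, z}"
    proof
      show "{r1, z} \<subseteq> {lam::real. real p < lam \<and> lam \<le> real p + 2 \<and> Dfun q1 p q2 lam = 0}"
        using z r1 Dq FSz by auto
    next
      show "{lam::real. real p < lam \<and> lam \<le> real p + 2 \<and> Dfun q1 p q2 lam = 0} \<subseteq> {r1, z}"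
      proof
        fix x assume "x \<in> {lam::real. real p < lam \<and> lam \<le> real p + 2 \<and> Dfun q1 p q2 lam = 0}"
        then have x: "real p < x" "x \<le> real p + 2" "FA p q1 x * FS p q1 x = 0"
          using D_sym[of q1 p x] True by auto
        then consider "FA p q1 x = 0" | "FS p q1 x = 0" by auto
        then show "x \<in> {r1, z}"
        proof cases
          case 1 then show ?thesis using FAuniq x by auto
        next
          case 2 then show ?thesis using zu x unfolding FS_alt by auto
        qed
      qed
    qed
    moreover have "r1 \<noteq> z" using z by simp
    ultimately show ?thesis by simp
  next
    case False
    have ne: "r1 \<noteq> r2"
    proof
      assume "r1 = r2"
      then have "FA p q1 r1 = FA p q2 r1" using r1 r2 by simp
      then show False using FA_ne[of r1 q1 q2 p] False q1 q2 r1 p6 by simp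
    qed
    show ?thesis
    proof (cases "r1 < r2")
      case True
      show ?thesis unfolding Dset
        by (rule two_roots[of "real p" "FA p q1" "FA p q2" r1 r2]) (use p6 c1 c2 d1 d2 r1 r2 True in auto)
    next
      case False
      then have "r2 < r1" using ne by simp
      then show ?thesis unfolding Dset'
        by (intro two_roots[of "real p" "FA p q2" "FA p q1" r2 r1]) (use p6 c1 c2 d1 d2 r1 r2 in auto)
    qed
  qed
  have P4: "q1 = q2 \<longrightarrow>
            (\<forall>lam::real. lam > 4 \<longrightarrow> Dfun q1 p q1 lam = FA p q1 lam * FS p q1 lam)
          \<and> (\<forall>lam::real. \<forall>v. lam > 4 \<and> FS p q1 lam = 0 \<and> eigvec_EKperp p q1 q1 lam v
                \<longrightarrow> symmetric_vec p q1 v)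
          \<and> (\<forall>lam::real. \<forall>v. lam > 4 \<and> FA p q1 lam = 0 \<and> eigvec_EKperp p q1 q1 lam v
                \<longrightarrow> antisymmetric_vec p q1 v)
          \<and> (\<exists>!lam::real. real p < lam \<and> lam < real p + 2 \<and> FA p q1 lam = 0)
          \<and> (\<forall>lam::real. (4 < lam \<and> lam \<le> real p) \<or> real p + 2 \<le> lam \<longrightarrow> FA p q1 lam \<noteq> 0)
          \<and> (\<exists>!lam::real. real p < lam \<and> lam < real p + 2 \<and> FS p q1 lam = 0)
          \<and> (\<forall>lam::real. (4 < lam \<and> lam \<le> real p) \<or> real p + 2 \<le> lam \<longrightarrow> FS p q1 lam \<noteq> 0)"
  proof
    assume qq: "q1 = q2"
    have a1: "\<forall>lam::real. lam > 4 \<longrightarrow> Dfun q1 p q1 lam = FA p q1 lam * FS p q1 lam"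
      using D_sym by blast
    have a2: "\<forall>lam::real. \<forall>v. lam > 4 \<and> FS p q1 lam = 0 \<and> eigvec_EKperp p q1 q1 lam v
                \<longrightarrow> symmetric_vec p q1 v"
      using G.sym_claims(1)[OF qq] qq by blast
    have a3: "\<forall>lam::real. \<forall>v. lam > 4 \<and> FA p q1 lam = 0 \<and> eigvec_EKperp p q1 q1 lam v
                \<longrightarrow> antisymmetric_vec p q1 v"
      using G.sym_claims(2)[OF qq] qq by blast
    have a4: "\<exists>!lam::real. real p < lam \<and> lam < real p + 2 \<and> FA p q1 lam = 0"
    proof
      show "real p < r1 \<and> r1 < real p + 2 \<and> FA p q1 r1 = 0" using r1 by simp
    next
      fix x assume "real p < x \<and> x < real p + 2 \<and> FA p q1 x = 0"
      then show "x = r1" using FAuniq by simp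
    qed
    have a5: "\<forall>lam::real. (4 < lam \<and> lam \<le> real p) \<or> real p + 2 \<le> lam \<longrightarrow> FA p q1 lam \<noteq> 0"
    proof (intro allI impI)
      fix lam :: real assume "(4 < lam \<and> lam \<le> real p) \<or> real p + 2 \<le> lam"
      then show "FA p q1 lam \<noteq> 0" using Fpos[of lam q1] Fneg[of lam q1] q1 by force
    qed
    obtain z where z: "real p < z" "z < r1" "2 * (real p - z) + (z - 2) * FA p q1 z = 0"
      and zu: "\<forall>x. real p < x \<and> x \<le> real p + 2 \<and> 2 * (real p - x) + (x - 2) * FA p q1 x = 0 \<longrightarrow> x = z"
      using symc[OF qq] by blast
    have a6: "\<exists>!lam::real. real p < lam \<and> lam < real p + 2 \<and> FS p q1 lam = 0"
    proof
      show "real p < z \<and> z < real p + 2 \<and> FS p q1 z = 0" using z r1 unfolding FS_alt by simp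
    next
      fix x assume "real p < x \<and> x < real p + 2 \<and> FS p q1 x = 0"
      then show "x = z" using zu unfolding FS_alt by simp
    qed
    have a7: "\<forall>lam::real. (4 < lam \<and> lam \<le> real p) \<or> real p + 2 \<le> lam \<longrightarrow> FS p q1 lam \<noteq> 0"
    proof (intro allI impI)
      fix lam :: real assume h: "(4 < lam \<and> lam \<le> real p) \<or> real p + 2 \<le> lam"
      show "FS p q1 lam \<noteq> 0"
      proof (cases "4 < lam \<and> lam \<le> real p")
        case True
        have "FA p q1 lam > 0" using Fpos True q1 by auto
        then have "(lam - 2) * FA p q1 lam > 0" using True by simp
        moreover have "2 * (real p - lam) \<ge> 0" using True by simp
        ultimately have "FS p q1 lam > 0" unfolding FS_alt by linarith
        then show ?thesis by simp
      next
        case False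
        then have l: "real p + 2 \<le> lam" using h by blast
        have "FA p q1 lam < 0" using Fneg l q1 by auto
        then have "(lam - 2) * FA p q1 lam < 0" using l p6 by (intro mult_pos_neg) auto
        moreover have "2 * (real p - lam) < 0" using l by simp
        ultimately have "FS p q1 lam < 0" unfolding FS_alt by linarith
        then show ?thesis by simp
      qed
    qed
    show "(\<forall>lam::real. lam > 4 \<longrightarrow> Dfun q1 p q1 lam = FA p q1 lam * FS p q1 lam)
          \<and> (\<forall>lam::real. \<forall>v. lam > 4 \<and> FS p q1 lam = 0 \<and> eigvec_EKperp p q1 q1 lam v
                \<longrightarrow> symmetric_vec p q1 v)
          \<and> (\<forall>lam::real. \<forall>v. lam > 4 \<and> FA p q1 lam = 0 \<and> eigvec_EKperp p q1 q1 lam v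
                \<longrightarrow> antisymmetric_vec p q1 v)
          \<and> (\<exists>!lam::real. real p < lam \<and> lam < real p + 2 \<and> FA p q1 lam = 0)
          \<and> (\<forall>lam::real. (4 < lam \<and> lam \<le> real p) \<or> real p + 2 \<le> lam \<longrightarrow> FA p q1 lam \<noteq> 0)
          \<and> (\<exists>!lam::real. real p < lam \<and> lam < real p + 2 \<and> FS p q1 lam = 0)
          \<and> (\<forall>lam::real. (4 < lam \<and> lam \<le> real p) \<or> real p + 2 \<le> lam \<longrightarrow> FS p q1 lam \<noteq> 0)"
      using a1 a2 a3 a4 a5 a6 a7 by blast
  qed
  show ?thesis using P1 P2 P3 P4 by blast
qed


end
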